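(* Fix a solution point $i$ with Jacobian value $J_i>0$. For a state $\hat{\mathbf U}=J_i[\rho,\rho V_1,\rho V_2,\rho V_3,\rho E]^\top\in\mathbb R^5$ with $\rho>0$, let $\mathrm{IE}(\hat{\mathbf U})=\hat u_5-\dfrac{\hat u_2^2+\hat u_3^2+\hat u_4^2}{2\hat u_1}$ denote its internal energy (where $\hat u_k$ are the components of $\hat{\mathbf U}$). Let $\hat{\mathbf U}_1,\hat{\mathbf U}_p\in\mathbb R^5$ be given, with $\hat{\mathbf U}_1$ having positive density $(\rho_1)_i>0$ and positive internal energy $\mathrm{IE}(\hat{\mathbf U}_1)>0$. For $\theta\in[0,1]$ put $\hat{\mathbf U}(\theta)=(1-\theta)\hat{\mathbf U}_1+\theta\hat{\mathbf U}_p$ with density $\rho_i(\theta)$ (first component divided by $J_i$). Let $\aleph\in(0,1)$, $\epsilon^{\rho}_i=(\rho_1)_i\aleph$, $\epsilon^{\mathrm{IE}}_i=\mathrm{IE}(\hat{\mathbf U}_1)\aleph$, and let $H^{\rho}_i=\{\theta\in[0,1]:\rho_i(\theta)\ge\epsilon^{\rho}_i\}=[0,\theta^{\rho}_i]$ with $0<\theta^{\rho}_i\le1$. Define $$H^{\mathrm{IE}}_i=\{\theta\in H^{\rho}_i\;:\;\mathrm{IE}(\hat{\mathbf U}(\theta))\ge\epsilon^{\mathrm{IE}}_i\}.$$ Then $H^{\mathrm{IE}}_i=[0,\theta^{\mathrm{IE}}_i]$ for some $0<\theta^{\mathrm{IE}}_i\le\theta^{\rho}_i$. Moreover: (1) if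 $0\le\theta<\theta^{\mathrm{IE}}_i$, then $\mathrm{IE}(\hat{\mathbf U}(\theta))>\epsilon^{\mathrm{IE}}_i$; and (2) if $\theta^{\mathrm{IE}}_i<\theta^{\rho}_i$, then $\mathrm{IE}(\hat{\mathbf U}(\theta^{\mathrm{IE}}_i))=\epsilon^{\mathrm{IE}}_i$.
   Context: $\hat{\mathbf U}_1$ and $\hat{\mathbf U}_p$ are the first-order (positivity-preserving) and $p$th-order updates at a solution point of a spectral collocation scheme; $\hat{\mathbf U}(\theta)$ is their convex blend with flux limiter $\theta$. The fact that $H^{\rho}_i$ is an interval $[0,\theta^\rho_i]$ with $0<\theta^\rho_i\le 1$ follows since $\rho_i(\theta)$ is affine in $\theta$ with $\rho_i(0)>\epsilon^\rho_i$. *)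

theory Defs
  imports "HOL-Analysis.Analysis" "HOL-Library.Numeral_Type"
begin

definition IE :: "real ^ 5 \<Rightarrow> real" where
  "IE U = U $ 5 - ((U $ 2)\<^sup>2 + (U $ 3)\<^sup>2 + (U $ 4)\<^sup>2) / (2 * U $ 1)"

definition blend :: "real ^ 5 \<Rightarrow> real ^ 5 \<Rightarrow> real \<Rightarrow> real ^ 5" where
  "blend U1 Up \<theta> = (1 - \<theta>) *\<^sub>R U1 + \<theta> *\<^sub>R Up"

end

theory Submission
  imports Defs
begin

lemma persp_ineq:
  fixes a b x y l :: real
  assumes a: "a > 0" and b: "b > 0" and l: "0 \<le> l" "l \<le> 1"
  shows "(l*x+(1-l)*y)\<^sup>2/(l*a+(1-l)*b) \<le> l*x\<^sup>2/a + (1-l)*y\<^sup>2/b"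
proof -
  define D where "D = l*a+(1-l)*b"
  have D: "D > 0" unfolding D_def
    using a b l by (cases "l = 0") (auto intro: add_pos_nonneg)
  have eq: "l*x\<^sup>2/a + (1-l)*y\<^sup>2/b - (l*x+(1-l)*y)\<^sup>2/D = l*(1-l)*(x*b-y*a)\<^sup>2/(a*b*D)"
    using a b D unfolding D_def by (simp add: field_simps power2_eq_square)
  have "l*(1-l)*(x*b-y*a)\<^sup>2/(a*b*D) \<ge> 0" using a b D l by simp
  then show ?thesis using eq unfolding D_def by linarith
qed

lemma abstract_ineq:
  fixes l q2 q3 q4 a2 a3 a4 b2 b3 b4 x5 y5 :: real
  assumes "q2 \<le> l*a2 + (1-l)*b2" "q3 \<le> l*a3 + (1-l)*b3" "q4 \<le> l*a4 + (1-l)*b4"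
  shows "l*(x5 - (a2+a3+a4)/2) + (1-l)*(y5 - (b2+b3+b4)/2) \<le> (l*x5+(1-l)*y5) - (q2+q3+q4)/2"
  using assms by (simp add: field_simps)

lemma IE_concave:
  fixes X Y :: "real ^ 5" and l :: real
  assumes "X $ 1 > 0" "Y $ 1 > 0" "0 \<le> l" "l \<le> 1"
  shows "IE (l *\<^sub>R X + (1-l) *\<^sub>R Y) \<ge> l * IE X + (1-l) * IE Y"
proof -
  have h: "\<And>k. (l*X$k+(1-l)*Y$k)\<^sup>2/(l*X$1+(1-l)*Y$1) \<le> l*(X$k)\<^sup>2/X$1 + (1-l)*(Y$k)\<^sup>2/Y$1"
    using persp_ineq assms by blast
  have c: "\<And>k. (l *\<^sub>R X + (1-l) *\<^sub>R Y) $ k = l*X$k+(1-l)*Y$k" by simp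
  have g: "\<And>a b c d. (a\<^sup>2+b\<^sup>2+c\<^sup>2)/(2*(d::real)) = (a\<^sup>2/d + b\<^sup>2/d + c\<^sup>2/d)/2"
    by (simp add: add_divide_distrib)
  have hx: "\<And>k. l*(X$k)\<^sup>2/X$1 = l*((X$k)\<^sup>2/X$1)" "\<And>k. (1-l)*(Y$k)\<^sup>2/Y$1 = (1-l)*((Y$k)\<^sup>2/Y$1)"
    by simp_all
  show ?thesis unfolding IE_def c g
    using h[of 2] h[of 3] h[of 4] unfolding hx
    by (rule abstract_ineq)
qed

theorem lemma2:
  fixes J aleph \<theta>\<rho> :: real and U1 Up :: "real ^ 5"
  assumes J_pos: "J > 0"
    and rho1_pos: "U1 $ 1 / J > 0"
    and IE1_pos: "IE U1 > 0"
    and aleph: "0 < aleph" "aleph < 1"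
    and H_rho: "{\<theta> \<in> {0..1}. blend U1 Up \<theta> $ 1 / J \<ge> (U1 $ 1 / J) * aleph} = {0..\<theta>\<rho>}"
    and theta_rho: "0 < \<theta>\<rho>" "\<theta>\<rho> \<le> 1"
  shows "\<exists>\<theta>IE. 0 < \<theta>IE \<and> \<theta>IE \<le> \<theta>\<rho> \<and>
           {\<theta> \<in> {\<theta> \<in> {0..1}. blend U1 Up \<theta> $ 1 / J \<ge> (U1 $ 1 / J) * aleph}. IE (blend U1 Up \<theta>) \<ge> IE U1 * aleph} = {0..\<theta>IE} \<and>
           (\<forall>\<theta>. 0 \<le> \<theta> \<and> \<theta> < \<theta>IE \<longrightarrow> IE (blend U1 Up \<theta>) > IE U1 * aleph) \<and>
           (\<theta>IE < \<theta>\<rho> \<longrightarrow> IE (blend U1 Up \<theta>IE) = IE U1 * aleph)"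
proof -
  define B where "B = blend U1 Up"
  define f where "f = (\<lambda>\<theta>. IE (B \<theta>))"
  define eps where "eps = IE U1 * aleph"
  have Bc: "\<And>\<theta> k. B \<theta> $ k = (1-\<theta>)*U1$k + \<theta>*Up$k" unfolding B_def blend_def by simp
  have pos: "B \<theta> $ 1 > 0" if "\<theta> \<in> {0..\<theta>\<rho>}" for \<theta>
  proof -
    have "\<theta> \<in> {\<theta> \<in> {0..1}. blend U1 Up \<theta> $ 1 / J \<ge> (U1 $ 1 / J) * aleph}"
      using H_rho that by simp
    then have "B \<theta> $ 1 / J \<ge> (U1 $ 1 / J) * aleph" unfolding B_def by simp
    moreover have "(U1 $ 1 / J) * aleph > 0" using rho1_pos aleph by (intro mult_pos_pos)
    ultimately have "B \<theta> $ 1 / J > 0" by linarith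
    then show ?thesis using J_pos by (simp add: zero_less_divide_iff)
  qed
  have aff: "B (l*a+(1-l)*b) = l *\<^sub>R B a + (1-l) *\<^sub>R B b" for l a b
    unfolding vec_eq_iff by (simp add: Bc algebra_simps)
  have conc: "f (l*a+(1-l)*b) \<ge> l * f a + (1-l) * f b"
    if "a \<in> {0..\<theta>\<rho>}" "b \<in> {0..\<theta>\<rho>}" "0 \<le> l" "l \<le> 1" for l a b
    unfolding f_def aff using IE_concave pos that by blast
  have ffun: "f = (\<lambda>\<theta>. ((1-\<theta>)*U1$5+\<theta>*Up$5) - (((1-\<theta>)*U1$2+\<theta>*Up$2)\<^sup>2 + ((1-\<theta>)*U1$3+\<theta>*Up$3)\<^sup>2
      + ((1-\<theta>)*U1$4+\<theta>*Up$4)\<^sup>2)/(2*((1-\<theta>)*U1$1+\<theta>*Up$1)))"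
    unfolding fun_eq_iff f_def IE_def Bc by simp
  have cont: "continuous_on {0..\<theta>\<rho>} f"
  proof -
    have nz: "\<forall>x\<in>{0..\<theta>\<rho>}. 2*((1-x)*U1$1+x*Up$1) \<noteq> 0"
      using pos unfolding Bc by force
    show ?thesis unfolding ffun by (intro continuous_intros nz)
  qed
  have f0: "f 0 > eps"
  proof -
    have "B 0 = U1" unfolding vec_eq_iff Bc by simp
    then show ?thesis unfolding f_def eps_def using IE1_pos aleph by simp
  qed
  define T where "T = {\<theta> \<in> {0..\<theta>\<rho>}. f \<theta> \<ge> eps}"
  have Teq: "T = {0..\<theta>\<rho>} \<inter> f -` {eps..}" unfolding T_def by auto
  have Tcl: "closed T" unfolding Teq by (rule continuous_closed_preimage[OF cont]) auto
  have T0: "0 \<in> T" unfolding T_def using f0 theta_rho by auto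
  have Tbdd: "bdd_above T" unfolding T_def by (rule bdd_aboveI[of _ \<theta>\<rho>]) auto
  define t where "t = Sup T"
  have tT: "t \<in> T" unfolding t_def using closed_contains_Sup[OF _ Tbdd Tcl] T0 by blast
  have upper: "x \<le> t" if "x \<in> T" for x unfolding t_def using cSup_upper[OF that Tbdd] .
  have t_le: "t \<le> \<theta>\<rho>" "f t \<ge> eps" "0 \<le> t" using tT unfolding T_def by auto
  have t_pos: "t > 0"
  proof -
    obtain d where d: "d > 0" "\<forall>x'\<in>{0..\<theta>\<rho>}. dist x' 0 < d \<longrightarrow> dist (f x') (f 0) < f 0 - eps"
      using cont f0 theta_rho unfolding continuous_on_iff
      by (metis atLeastAtMost_iff diff_gt_0_iff_gt order_refl less_imp_le)
    define x where "x = min (d/2) \<theta>\<rho>"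
    have x: "x \<in> {0..\<theta>\<rho>}" "dist x 0 < d" "x > 0" unfolding x_def using d theta_rho by (auto simp: dist_real_def)
    then have "dist (f x) (f 0) < f 0 - eps" using d by blast
    then have "f x \<ge> eps" by (simp add: dist_real_def)
    then have "x \<in> T" using x unfolding T_def by auto
    then show ?thesis using upper x by force
  qed
  have interp: "f x \<ge> (x/t) * f t + (1 - x/t) * f 0" if "0 \<le> x" "x \<le> t" for x
  proof -
    have "f ((x/t)*t + (1-x/t)*0) \<ge> (x/t) * f t + (1 - x/t) * f 0"
      using conc[of t 0 "x/t"] t_le t_pos that theta_rho by auto
    then show ?thesis using t_pos by simp
  qed
  have Tt: "T = {0..t}"
  proof
    show "T \<subseteq> {0..t}" using upper unfolding T_def by auto
  next
    show "{0..t} \<subseteq> T"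
    proof
      fix x assume x: "x \<in> {0..t}"
      have l: "0 \<le> x/t" "x/t \<le> 1" using x t_pos by auto
      have "(x/t) * f t + (1 - x/t) * f 0 \<ge> (x/t) * eps + (1 - x/t) * eps"
        using l t_le f0 by (intro add_mono mult_left_mono) auto
      then have "f x \<ge> eps" using interp[of x] x by (simp add: algebra_simps)
      then show "x \<in> T" using x t_le unfolding T_def by auto
    qed
  qed
  have part1: "f x > eps" if "0 \<le> x" "x < t" for x
  proof -
    have l: "0 \<le> x/t" "x/t < 1" using that t_pos by auto
    have a: "(x/t) * f t \<ge> (x/t) * eps" using l t_le by (intro mult_left_mono) auto
    have b: "(1 - x/t) * f 0 > (1 - x/t) * eps" using l f0 by (intro mult_strict_left_mono) auto
    have "(x/t) * f t + (1 - x/t) * f 0 > eps" using a b by (simp add: algebra_simps)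
    then show ?thesis using interp[of x] that by linarith
  qed
  have part2: "f t = eps" if "t < \<theta>\<rho>"
  proof (rule ccontr)
    assume "f t \<noteq> eps"
    then have gt: "f t > eps" using t_le by simp
    obtain d where d: "d > 0" "\<forall>x'\<in>{0..\<theta>\<rho>}. dist x' t < d \<longrightarrow> dist (f x') (f t) < f t - eps"
      using cont gt t_le unfolding continuous_on_iff
      by (metis atLeastAtMost_iff diff_gt_0_iff_gt)
    define x where "x = min (t + d/2) \<theta>\<rho>"
    have x: "x \<in> {0..\<theta>\<rho>}" "dist x t < d" "x > t" unfolding x_def using d that t_le by (auto simp: dist_real_def)
    then have "dist (f x) (f t) < f t - eps" using d by blast
    then have "f x \<ge> eps" by (simp add: dist_real_def)
    then have "x \<in> T" using x unfolding T_def by auto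
    then show False using upper x by force
  qed
  have setq: "{\<theta> \<in> {\<theta> \<in> {0..1}. blend U1 Up \<theta> $ 1 / J \<ge> (U1 $ 1 / J) * aleph}. IE (blend U1 Up \<theta>) \<ge> IE U1 * aleph} = T"
    unfolding H_rho T_def f_def B_def eps_def by simp
  show ?thesis
    apply (rule exI[of _ t])
    unfolding setq Tt
    using t_pos t_le part1 part2 unfolding f_def B_def eps_def by auto
qed

end
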